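(* Let $(R_0,R_1,s,t,i,\circ)$ be a strict $2$-rack and let $X:=\ker(s)=\{f\in R_1:s(f)=1\}$. Then $x\cdot r:=x\lhd i(r)$ ($x\in X$, $r\in R_0$) defines an action of the rack $R_0$ on the set $X$, and the restriction $t|_{X}:X\to R_0$ satisfies $t(x\cdot r)=t(x)\lhd r$. Consequently $(R_0,X,t|_X)$ is a generalized augmented rack, and so (with the rack product $x\lhd' y:=x\cdot t(y)$ on $X$) $t|_X:X\to R_0$ is a crossed module of racks.
   Context: A (right) rack is a set with a binary operation $\lhd$ such that each $x\mapsto x\lhd y$ is bijective and $(x\lhd y)\lhd z=(x\lhd z)\lhd(y\lhd z)$; it is pointed if it has an element $1$ with $1\lhd x=1$, $x\lhd 1=x$. A strict $2$-rack is a category object in racks: pointed racks $R_0,R_1$, morphisms of pointed racks $s,t:R_1\to R_0$, $i:R_0\to R_1$, a composition $\circ:R_1\times_{R_0}R_1\to R_1$ which is a rack morphism, satisfying the category axioms (in particular $s\circ i=t\circ i=\mathrm{id}_{R_0}$). An action of a rack $R$ on a set $X$ is a family of bijections $x\mapsto x\cdot r$ with $(x\cdot r)\cdot r'=(x\cdot r')\cdot(r\lhd r')$. A generalized augmented rack is $(R,X,p)$ with $R$ a rack, $X$ an $R$-set and $p:X\to R$ a map with $p(x\cdot r)=p(x)\lhd r$. A crossed module of racks is a rack morphism $\mu:A\to B$ with an action of $B$ on $A$ by automorphisms (i.e. also $(a\lhd a')\cdot b=(a\cdot b)\lhd(a'\cdot b)$) such that $\mu(a\cdot b)=\mu(a)\lhd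 b$ and $a\cdot\mu(a')=a\lhd a'$. *)

theory Defs
  imports Main
begin

text \<open>Racks are given by an explicit carrier set and a binary operation
  (the right rack operation, written x \<lhd> y as op x y).\<close>

definition rack :: "'a set \<Rightarrow> ('a \<Rightarrow> 'a \<Rightarrow> 'a) \<Rightarrow> bool" where
  "rack A op \<longleftrightarrow>
     (\<forall>x\<in>A. \<forall>y\<in>A. op x y \<in> A) \<and>
     (\<forall>y\<in>A. bij_betw (\<lambda>x. op x y) A A) \<and>
     (\<forall>x\<in>A. \<forall>y\<in>A. \<forall>z\<in>A. op (op x y) z = op (op x z) (op y z))"

definition pointed_rack :: "'a set \<Rightarrow> ('a \<Rightarrow> 'a \<Rightarrow> 'a) \<Rightarrow> 'a \<Rightarrow> bool" where
  "pointed_rack A op e \<longleftrightarrow> rack A op \<and> e \<in> A \<and>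
     (\<forall>x\<in>A. op e x = e \<and> op x e = x)"

definition rack_hom ::
  "'a set \<Rightarrow> ('a \<Rightarrow> 'a \<Rightarrow> 'a) \<Rightarrow> 'b set \<Rightarrow> ('b \<Rightarrow> 'b \<Rightarrow> 'b) \<Rightarrow> ('a \<Rightarrow> 'b) \<Rightarrow> bool" where
  "rack_hom A opA B opB f \<longleftrightarrow>
     (\<forall>x\<in>A. f x \<in> B) \<and> (\<forall>x\<in>A. \<forall>y\<in>A. f (opA x y) = opB (f x) (f y))"

definition pointed_rack_hom ::
  "'a set \<Rightarrow> ('a \<Rightarrow> 'a \<Rightarrow> 'a) \<Rightarrow> 'a \<Rightarrow> 'b set \<Rightarrow> ('b \<Rightarrow> 'b \<Rightarrow> 'b) \<Rightarrow> 'b \<Rightarrow> ('a \<Rightarrow> 'b) \<Rightarrow> bool" where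
  "pointed_rack_hom A opA eA B opB eB f \<longleftrightarrow> rack_hom A opA B opB f \<and> f eA = eB"

text \<open>Strict 2-rack: a category object in (pointed) racks.  Objects R0, morphisms R1,
  source s, target t, identities i, and composition cmp g f (= g \<circ> f),
  defined on the fibre product of pairs (g,f) with s g = t f.\<close>

definition strict_2rack ::
  "'a set \<Rightarrow> ('a \<Rightarrow> 'a \<Rightarrow> 'a) \<Rightarrow> 'a \<Rightarrow> 'b set \<Rightarrow> ('b \<Rightarrow> 'b \<Rightarrow> 'b) \<Rightarrow> 'b \<Rightarrow>
   ('b \<Rightarrow> 'a) \<Rightarrow> ('b \<Rightarrow> 'a) \<Rightarrow> ('a \<Rightarrow> 'b) \<Rightarrow> ('b \<Rightarrow> 'b \<Rightarrow> 'b) \<Rightarrow> bool" where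
  "strict_2rack R0 op0 e0 R1 op1 e1 s t i cmp \<longleftrightarrow>
     pointed_rack R0 op0 e0 \<and> pointed_rack R1 op1 e1 \<and>
     pointed_rack_hom R1 op1 e1 R0 op0 e0 s \<and>
     pointed_rack_hom R1 op1 e1 R0 op0 e0 t \<and>
     pointed_rack_hom R0 op0 e0 R1 op1 e1 i \<and>
     \<comment> \<open>composition is a map R1 \<times>_{R0} R1 \<rightarrow> R1 which is a rack morphism\<close>
     (\<forall>g\<in>R1. \<forall>f\<in>R1. s g = t f \<longrightarrow> cmp g f \<in> R1) \<and>
     (\<forall>g\<in>R1. \<forall>f\<in>R1. \<forall>g'\<in>R1. \<forall>f'\<in>R1. s g = t f \<longrightarrow> s g' = t f' \<longrightarrow>
         cmp (op1 g g') (op1 f f') = op1 (cmp g f) (cmp g' f')) \<and>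
     \<comment> \<open>category axioms\<close>
     (\<forall>x\<in>R0. s (i x) = x \<and> t (i x) = x) \<and>
     (\<forall>g\<in>R1. \<forall>f\<in>R1. s g = t f \<longrightarrow> s (cmp g f) = s f \<and> t (cmp g f) = t g) \<and>
     (\<forall>h\<in>R1. \<forall>g\<in>R1. \<forall>f\<in>R1. s h = t g \<longrightarrow> s g = t f \<longrightarrow>
         cmp (cmp h g) f = cmp h (cmp g f)) \<and>
     (\<forall>f\<in>R1. cmp f (i (s f)) = f \<and> cmp (i (t f)) f = f)"

definition rack_action ::
  "'a set \<Rightarrow> ('a \<Rightarrow> 'a \<Rightarrow> 'a) \<Rightarrow> 'x set \<Rightarrow> ('x \<Rightarrow> 'a \<Rightarrow> 'x) \<Rightarrow> bool" where
  "rack_action R op X act \<longleftrightarrow>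
     (\<forall>r\<in>R. bij_betw (\<lambda>x. act x r) X X) \<and>
     (\<forall>x\<in>X. \<forall>r\<in>R. \<forall>r'\<in>R. act (act x r) r' = act (act x r') (op r r'))"

definition gen_augmented_rack ::
  "'a set \<Rightarrow> ('a \<Rightarrow> 'a \<Rightarrow> 'a) \<Rightarrow> 'x set \<Rightarrow> ('x \<Rightarrow> 'a \<Rightarrow> 'x) \<Rightarrow> ('x \<Rightarrow> 'a) \<Rightarrow> bool" where
  "gen_augmented_rack R op X act p \<longleftrightarrow>
     rack R op \<and> rack_action R op X act \<and>
     (\<forall>x\<in>X. p x \<in> R) \<and>
     (\<forall>x\<in>X. \<forall>r\<in>R. p (act x r) = op (p x) r)"

definition crossed_module_racks ::
  "'x set \<Rightarrow> ('x \<Rightarrow> 'x \<Rightarrow> 'x) \<Rightarrow> 'a set \<Rightarrow> ('a \<Rightarrow> 'a \<Rightarrow> 'a) \<Rightarrow> ('x \<Rightarrow> 'a \<Rightarrow> 'x) \<Rightarrow> ('x \<Rightarrow> 'a) \<Rightarrow> bool" where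
  "crossed_module_racks A opA B opB act mu \<longleftrightarrow>
     rack A opA \<and> rack B opB \<and> rack_hom A opA B opB mu \<and>
     rack_action B opB A act \<and>
     (\<forall>a\<in>A. \<forall>a'\<in>A. \<forall>b\<in>B. act (opA a a') b = opA (act a b) (act a' b)) \<and>
     (\<forall>a\<in>A. \<forall>b\<in>B. mu (act a b) = opB (mu a) b) \<and>
     (\<forall>a\<in>A. \<forall>a'\<in>A. act a (mu a') = opA a a')"

end

theory Submission
  imports Defs
begin

theorem mainTheorem5:
  fixes R0 :: "'a set" and op0 :: "'a \<Rightarrow> 'a \<Rightarrow> 'a" and e0 :: 'a
    and R1 :: "'b set" and op1 :: "'b \<Rightarrow> 'b \<Rightarrow> 'b" and e1 :: 'b
    and s t :: "'b \<Rightarrow> 'a" and i :: "'a \<Rightarrow> 'b" and cmp :: "'b \<Rightarrow> 'b \<Rightarrow> 'b"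
  assumes "strict_2rack R0 op0 e0 R1 op1 e1 s t i cmp"
  defines "X \<equiv> {f \<in> R1. s f = e0}"
      and "act \<equiv> (\<lambda>x r. op1 x (i r))"
  shows "rack_action R0 op0 X act
       \<and> (\<forall>x\<in>X. \<forall>r\<in>R0. t (act x r) = op0 (t x) r)
       \<and> gen_augmented_rack R0 op0 X act t
       \<and> crossed_module_racks X (\<lambda>x y. act x (t y)) R0 op0 act t"
proof -
  have P: "pointed_rack R0 op0 e0" "pointed_rack R1 op1 e1" "pointed_rack_hom R1 op1 e1 R0 op0 e0 s"
   "pointed_rack_hom R1 op1 e1 R0 op0 e0 t" "pointed_rack_hom R0 op0 e0 R1 op1 e1 i"
   "\<forall>x\<in>R0. s (i x) = x \<and> t (i x) = x"
    using assms(1) unfolding strict_2rack_def by auto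
  have r0: "rack R0 op0" and r1: "rack R1 op1" using P(1,2) unfolding pointed_rack_def by auto
  have cl1: "\<And>x y. x \<in> R1 \<Longrightarrow> y \<in> R1 \<Longrightarrow> op1 x y \<in> R1" using r1 unfolding rack_def by blast
  have bij0: "\<And>y. y \<in> R0 \<Longrightarrow> bij_betw (\<lambda>x. op0 x y) R0 R0" using r0 unfolding rack_def by blast
  have bij1: "\<And>y. y \<in> R1 \<Longrightarrow> bij_betw (\<lambda>x. op1 x y) R1 R1" using r1 unfolding rack_def by blast
  have sd1: "\<And>x y z. x \<in> R1 \<Longrightarrow> y \<in> R1 \<Longrightarrow> z \<in> R1 \<Longrightarrow> op1 (op1 x y) z = op1 (op1 x z) (op1 y z)"
    using r1 unfolding rack_def by blast
  have e0: "e0 \<in> R0" and e0l: "\<And>x. x \<in> R0 \<Longrightarrow> op0 e0 x = e0" using P(1) unfolding pointed_rack_def by auto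
  have sR: "\<And>x. x \<in> R1 \<Longrightarrow> s x \<in> R0"
    and sh: "\<And>x y. x \<in> R1 \<Longrightarrow> y \<in> R1 \<Longrightarrow> s (op1 x y) = op0 (s x) (s y)"
    using P(3) unfolding pointed_rack_hom_def rack_hom_def by auto
  have tR: "\<And>x. x \<in> R1 \<Longrightarrow> t x \<in> R0"
    and th: "\<And>x y. x \<in> R1 \<Longrightarrow> y \<in> R1 \<Longrightarrow> t (op1 x y) = op0 (t x) (t y)"
    using P(4) unfolding pointed_rack_hom_def rack_hom_def by auto
  have iR: "\<And>x. x \<in> R0 \<Longrightarrow> i x \<in> R1"
    and ih: "\<And>x y. x \<in> R0 \<Longrightarrow> y \<in> R0 \<Longrightarrow> i (op0 x y) = op1 (i x) (i y)"
    using P(5) unfolding pointed_rack_hom_def rack_hom_def by auto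
  have si: "\<And>x. x \<in> R0 \<Longrightarrow> s (i x) = x" and ti: "\<And>x. x \<in> R0 \<Longrightarrow> t (i x) = x" using P(6) by auto
  have XR: "\<And>x. x \<in> X \<Longrightarrow> x \<in> R1" by (simp add: X_def)
  have actX: "\<And>x r. x \<in> X \<Longrightarrow> r \<in> R0 \<Longrightarrow> act x r \<in> X"
    by (auto simp: X_def act_def cl1 iR sh si e0l)
  have tact: "\<And>x r. x \<in> X \<Longrightarrow> r \<in> R0 \<Longrightarrow> t (act x r) = op0 (t x) r"
    by (auto simp: X_def act_def iR th ti)
  have actax: "\<And>x r r'. x \<in> X \<Longrightarrow> r \<in> R0 \<Longrightarrow> r' \<in> R0 \<Longrightarrow> act (act x r) r' = act (act x r') (op0 r r')"
    by (simp add: act_def sd1 XR iR ih)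
  have actbij: "\<And>r. r \<in> R0 \<Longrightarrow> bij_betw (\<lambda>x. act x r) X X"
  proof -
    fix r assume r: "r \<in> R0"
    have b: "bij_betw (\<lambda>x. op1 x (i r)) R1 R1" using bij1 iR r by blast
    show "bij_betw (\<lambda>x. act x r) X X"
      unfolding bij_betw_def
    proof
      show "inj_on (\<lambda>x. act x r) X" using b unfolding act_def bij_betw_def inj_on_def
        by (auto simp: X_def)
      show "(\<lambda>x. act x r) ` X = X"
      proof
        show "(\<lambda>x. act x r) ` X \<subseteq> X" using actX r by auto
        show "X \<subseteq> (\<lambda>x. act x r) ` X"
        proof
          fix y assume y: "y \<in> X"
          then obtain x where x: "x \<in> R1" "op1 x (i r) = y" using b XR
            unfolding bij_betw_def by (metis imageE)
          have "op0 (s x) r = e0" using x y sh iR si r by (auto simp: X_def)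
          moreover have "op0 e0 r = e0" using e0l r .
          moreover have "inj_on (\<lambda>z. op0 z r) R0" using bij0 r bij_betw_def by blast
          ultimately have "s x = e0" using sR x e0 by (auto simp: inj_on_def)
          then show "y \<in> (\<lambda>x. act x r) ` X" using x by (auto simp: X_def act_def)
        qed
      qed
    qed
  qed
  have RA: "rack_action R0 op0 X act" unfolding rack_action_def using actbij actax by auto
  have tX: "\<And>x. x \<in> X \<Longrightarrow> t x \<in> R0" using XR tR by auto
  have rX: "rack X (\<lambda>x y. act x (t y))" unfolding rack_def
  proof (intro conjI ballI)
    fix x y assume "x \<in> X" "y \<in> X" then show "act x (t y) \<in> X" using actX tX by blast
  next
    fix y assume "y \<in> X" then show "bij_betw (\<lambda>x. act x (t y)) X X" using actbij tX by blast
  next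
    fix x y z assume h: "x \<in> X" "y \<in> X" "z \<in> X"
    then show "act (act x (t y)) (t z) = act (act x (t z)) (t (act y (t z)))"
      using actax[of x "t y" "t z"] tact[of y "t z"] tX by simp
  qed
  have aut: "\<forall>a\<in>X. \<forall>a'\<in>X. \<forall>b\<in>R0. act (act a (t a')) b = act (act a b) (t (act a' b))"
    using actax tact tX by simp
  have hom: "rack_hom X (\<lambda>x y. act x (t y)) R0 op0 t" unfolding rack_hom_def
    using tX tact by simp
  show ?thesis
    unfolding gen_augmented_rack_def crossed_module_racks_def
    using RA tact r0 tX rX hom aut by simp
qed

end
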